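(* Let $(\eta_k)_{k\in\mathbb N}$ be i.i.d. real random variables with $\mathbb{E}\eta_1=0$ and $\mathbb{E}\eta_1^2=1$, and let $\alpha>-1/2$. Then $$\lim_{s\to0+}f_\alpha(s)\sum_{k=2}^{M(s)}\frac{(\log k)^\alpha}{k^{1/2+s}}\eta_k=0\quad\text{a.s.}$$
   Context: $M(s)=\lfloor 1/s\rfloor$ for $s>0$; $c_\alpha=\Gamma(1+2\alpha)/2^{2\alpha}$; and $f_\alpha(s)=\big(s^{1+2\alpha}/(c_\alpha\log\log(1/s))\big)^{1/2}$ for $s\in(0,1/e)$. *)

theory Defs
  imports "HOL-Probability.Probability"
begin

definition Mfl :: "real \<Rightarrow> nat" where
  "Mfl s = nat \<lfloor>1 / s\<rfloor>"

definition c_alpha :: "real \<Rightarrow> real" where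
  "c_alpha \<alpha> = Gamma (1 + 2 * \<alpha>) / 2 powr (2 * \<alpha>)"

definition f_alpha :: "real \<Rightarrow> real \<Rightarrow> real" where
  "f_alpha \<alpha> s = sqrt (s powr (1 + 2 * \<alpha>) / (c_alpha \<alpha> * ln (ln (1 / s))))"

end

theory Submission
  imports Defs "HOL-Real_Asymp.Real_Asymp"
begin


primrec mx :: "(nat \<Rightarrow> 'a \<Rightarrow> real) \<Rightarrow> nat \<Rightarrow> nat \<Rightarrow> 'a \<Rightarrow> real" where
  "mx X 0 a \<omega> = \<bar>X a \<omega>\<bar>"
| "mx X (Suc l) a \<omega> = \<bar>\<Sum>k\<in>{a..<a+2^l}. X k \<omega>\<bar> + max (mx X l a \<omega>) (mx X l (a+2^l) \<omega>)"

lemma mx_nonneg: "0 \<le> mx X l a \<omega>"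
  by (induction l arbitrary: a) (fastforce intro: add_nonneg_nonneg simp: le_max_iff_disj)+

lemma mx_bound: "i \<le> 2^l \<Longrightarrow> \<bar>\<Sum>k\<in>{a..<a+i}. X k \<omega>\<bar> \<le> mx X l a \<omega>"
proof (induction l arbitrary: a i)
  case 0
  then have "i = 0 \<or> i = 1" by auto
  then show ?case by auto
next
  case (Suc l)
  show ?case
  proof (cases "i \<le> 2^l")
    case True
    then have "\<bar>\<Sum>k\<in>{a..<a+i}. X k \<omega>\<bar> \<le> mx X l a \<omega>" using Suc.IH by blast
    then show ?thesis by auto
  next
    case False
    define j where "j = i - 2^l"
    have j: "j \<le> 2^l" "i = 2^l + j" using False Suc.prems by (auto simp: j_def)
    have "(\<Sum>k\<in>{a..<a+i}. X k \<omega>) = (\<Sum>k\<in>{a..<a+2^l}. X k \<omega>) + (\<Sum>k\<in>{a+2^l..<a+2^l+j}. X k \<omega>)"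
      using j by (simp add: sum.atLeastLessThan_concat add.assoc)
    moreover have "\<bar>\<Sum>k\<in>{a+2^l..<a+2^l+j}. X k \<omega>\<bar> \<le> mx X l (a+2^l) \<omega>" using Suc.IH j by blast
    ultimately show ?thesis by auto
  qed
qed

lemma sq_split: "(t::real) > 0 \<Longrightarrow> (d + z)^2 \<le> (1+t)*d^2 + (1+1/t)*z^2"
proof -
  assume t: "t > 0"
  have "(1+t)*d^2 + (1+1/t)*z^2 - (d+z)^2 = (t*d - z)^2 / t"
    using t by (simp add: field_simps power2_eq_square)
  moreover have "0 \<le> (t*d - z)^2 / t" using t by simp
  ultimately show ?thesis by linarith
qed

context prob_space
begin

lemma mx_measurable[measurable]:
  assumes [measurable]: "\<And>k. X k \<in> borel_measurable M"
  shows "mx X l a \<in> borel_measurable M"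
proof (induction l arbitrary: a)
  case 0
  have "mx X 0 a = (\<lambda>\<omega>. \<bar>X a \<omega>\<bar>)" by (rule ext) simp
  then show ?case by simp
next
  case (Suc l)
  have [measurable]: "\<And>a. mx X l a \<in> borel_measurable M" by fact
  have "mx X (Suc l) a = (\<lambda>\<omega>. \<bar>\<Sum>k\<in>{a..<a+2^l}. X k \<omega>\<bar> + max (mx X l a \<omega>) (mx X l (a+2^l) \<omega>))"
    by (rule ext) simp
  then show ?case by simp
qed

lemma sum_sq_integrable:
  fixes X :: "nat \<Rightarrow> 'a \<Rightarrow> real"
  assumes "\<And>i j. integrable M (\<lambda>\<omega>. X i \<omega> * X j \<omega>)"
  shows "integrable M (\<lambda>\<omega>. (\<Sum>k\<in>A. X k \<omega>)^2)"
proof -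
  have "(\<lambda>\<omega>. (\<Sum>k\<in>A. X k \<omega>)^2) = (\<lambda>\<omega>. \<Sum>i\<in>A. \<Sum>j\<in>A. X i \<omega> * X j \<omega>)"
    by (rule ext) (simp only: power2_eq_square sum_product)
  then show ?thesis using assms by simp
qed

lemma sum_sq_integral:
  fixes X :: "nat \<Rightarrow> 'a \<Rightarrow> real"
  assumes "\<And>i j. integrable M (\<lambda>\<omega>. X i \<omega> * X j \<omega>)"
    and "\<And>i j. (\<integral>\<omega>. X i \<omega> * X j \<omega> \<partial>M) = (if i = j then v i else 0)"
    and "finite A"
  shows "(\<integral>\<omega>. (\<Sum>k\<in>A. X k \<omega>)^2 \<partial>M) = (\<Sum>k\<in>A. v k)"
proof -
  have "(\<lambda>\<omega>. (\<Sum>k\<in>A. X k \<omega>)^2) = (\<lambda>\<omega>. \<Sum>i\<in>A. \<Sum>j\<in>A. X i \<omega> * X j \<omega>)"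
    by (rule ext) (simp only: power2_eq_square sum_product)
  then have "(\<integral>\<omega>. (\<Sum>k\<in>A. X k \<omega>)^2 \<partial>M) = (\<Sum>i\<in>A. \<Sum>j\<in>A. \<integral>\<omega>. X i \<omega> * X j \<omega> \<partial>M)"
    using assms(1) by (simp add: Bochner_Integration.integral_sum)
  also have "\<dots> = (\<Sum>i\<in>A. \<Sum>j\<in>A. if i = j then v i else 0)" by (simp only: assms(2))
  also have "\<dots> = (\<Sum>i\<in>A. v i)" using assms(3) by (simp add: sum.delta)
  finally show ?thesis .
qed

lemma mx_L2:
  fixes X :: "nat \<Rightarrow> 'a \<Rightarrow> real"
  assumes meas[measurable]: "\<And>k. X k \<in> borel_measurable M"
   and int: "\<And>i j. integrable M (\<lambda>\<omega>. X i \<omega> * X j \<omega>)"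
   and cov: "\<And>i j. (\<integral>\<omega>. X i \<omega> * X j \<omega> \<partial>M) = (if i = j then v i else 0)"
  shows "integrable M (\<lambda>\<omega>. (mx X l a \<omega>)^2) \<and>
         (\<integral>\<omega>. (mx X l a \<omega>)^2 \<partial>M) \<le> (real l + 1)^2 * (\<Sum>k\<in>{a..<a+2^l}. v k)"
proof (induction l arbitrary: a)
  case 0
  have e: "(\<lambda>\<omega>. (mx X 0 a \<omega>)^2) = (\<lambda>\<omega>. X a \<omega> * X a \<omega>)"
    by (rule ext) (simp add: power2_eq_square)
  show ?case unfolding e using int[of a a] cov[of a a] by simp
next
  case (Suc l)
  define t where "t = real l + 1"
  have t: "t > 0" by (simp add: t_def)
  define D where "D = (\<lambda>\<omega>. \<Sum>k\<in>{a..<a+2^l}. X k \<omega>)"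
  define R where "R = (\<lambda>\<omega>. (1+t) * (D \<omega>)^2 + (1+1/t) * ((mx X l a \<omega>)^2 + (mx X l (a+2^l) \<omega>)^2))"
  have iD: "integrable M (\<lambda>\<omega>. (D \<omega>)^2)" unfolding D_def by (rule sum_sq_integrable[OF int])
  have eD: "(\<integral>\<omega>. (D \<omega>)^2 \<partial>M) = (\<Sum>k\<in>{a..<a+2^l}. v k)"
    unfolding D_def by (rule sum_sq_integral[OF int cov]) simp
  have I1: "integrable M (\<lambda>\<omega>. (mx X l a \<omega>)^2)" 
    and B1: "(\<integral>\<omega>. (mx X l a \<omega>)^2 \<partial>M) \<le> t^2 * (\<Sum>k\<in>{a..<a+2^l}. v k)"
    using Suc.IH[of a] by (auto simp: t_def)
  have I2: "integrable M (\<lambda>\<omega>. (mx X l (a+2^l) \<omega>)^2)" 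
    and B2: "(\<integral>\<omega>. (mx X l (a+2^l) \<omega>)^2 \<partial>M) \<le> t^2 * (\<Sum>k\<in>{a+2^l..<a+2^l+2^l}. v k)"
    using Suc.IH[of "a+2^l"] by (auto simp: t_def)
  have iR: "integrable M R" unfolding R_def using iD I1 I2 by simp
  have pw: "(mx X (Suc l) a \<omega>)^2 \<le> R \<omega>" for \<omega>
  proof -
    let ?z = "max (mx X l a \<omega>) (mx X l (a+2^l) \<omega>)"
    have "(mx X (Suc l) a \<omega>)^2 = (\<bar>D \<omega>\<bar> + ?z)^2" by (simp add: D_def)
    also have "\<dots> \<le> (1+t) * \<bar>D \<omega>\<bar>^2 + (1+1/t) * ?z^2" by (rule sq_split[OF t])
    also have "?z^2 \<le> (mx X l a \<omega>)^2 + (mx X l (a+2^l) \<omega>)^2"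
      using mx_nonneg[of X l a \<omega>] mx_nonneg[of X l "a+2^l" \<omega>] by (simp add: max_def)
    then have "(1+1/t) * ?z^2 \<le> (1+1/t) * ((mx X l a \<omega>)^2 + (mx X l (a+2^l) \<omega>)^2)"
      using t by (intro mult_left_mono) auto
    finally show ?thesis by (simp add: R_def)
  qed
  have Rnn: "0 \<le> R \<omega>" for \<omega> unfolding R_def using t by (intro add_nonneg_nonneg mult_nonneg_nonneg) auto
  have iS: "integrable M (\<lambda>\<omega>. (mx X (Suc l) a \<omega>)^2)"
  proof (rule Bochner_Integration.integrable_bound[OF iR])
    show "AE \<omega> in M. norm ((mx X (Suc l) a \<omega>)^2) \<le> norm (R \<omega>)"
      using pw Rnn by (intro AE_I2) (metis abs_of_nonneg real_norm_def zero_le_power2)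
  qed simp
  have "(\<integral>\<omega>. (mx X (Suc l) a \<omega>)^2 \<partial>M) \<le> (\<integral>\<omega>. R \<omega> \<partial>M)"
    by (rule integral_mono[OF iS iR pw])
  also have "(\<integral>\<omega>. R \<omega> \<partial>M) = (1+t) * (\<integral>\<omega>. (D \<omega>)^2 \<partial>M) + (1+1/t) * ((\<integral>\<omega>. (mx X l a \<omega>)^2 \<partial>M) + (\<integral>\<omega>. (mx X l (a+2^l) \<omega>)^2 \<partial>M))"
    unfolding R_def using iD I1 I2 by simp
  also have "\<dots> \<le> (1+t) * (\<Sum>k\<in>{a..<a+2^l}. v k) + (1+1/t) * (t^2 * (\<Sum>k\<in>{a..<a+2^l}. v k) + t^2 * (\<Sum>k\<in>{a+2^l..<a+2^l+2^l}. v k))"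
    using B1 B2 t unfolding eD by (intro add_mono mult_left_mono) auto
  also have "\<dots> \<le> (real (Suc l) + 1)^2 * (\<Sum>k\<in>{a..<a+2^Suc l}. v k)"
  proof -
    have vnn: "0 \<le> v k" for k
    proof -
      have "0 \<le> (\<integral>\<omega>. X k \<omega> * X k \<omega> \<partial>M)" by simp
      then show ?thesis using cov[of k k] by simp
    qed
    define V1 where "V1 = (\<Sum>k\<in>{a..<a+2^l}. v k)"
    define V2 where "V2 = (\<Sum>k\<in>{a+2^l..<a+2^l+2^l}. v k)"
    have sp: "(\<Sum>k\<in>{a..<a+2^Suc l}. v k) = V1 + V2"
      unfolding V1_def V2_def by (simp add: sum.atLeastLessThan_concat add.assoc mult_2)
    have V2: "0 \<le> V2" unfolding V2_def using vnn by (simp add: sum_nonneg)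
    have "(1+t) * V1 + (1+1/t) * (t^2 * V1 + t^2 * V2) = (t+1) * ((t+1) * V1 + t * V2)"
      using t by (simp add: field_simps power2_eq_square)
    also have "\<dots> \<le> (t+1) * ((t+1) * V1 + (t+1) * V2)"
      using t V2 by (intro mult_left_mono add_left_mono mult_right_mono) auto
    also have "\<dots> = (real (Suc l) + 1)^2 * (V1 + V2)" by (simp add: t_def power2_eq_square algebra_simps)
    finally show ?thesis unfolding sp V1_def[symmetric] V2_def[symmetric] .
  qed
  finally show ?case using iS by simp
qed

lemma mx_AE:
  fixes X :: "nat \<Rightarrow> 'a \<Rightarrow> real"
  assumes meas[measurable]: "\<And>k. X k \<in> borel_measurable M"
   and int: "\<And>i j. integrable M (\<lambda>\<omega>. X i \<omega> * X j \<omega>)"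
   and cov: "\<And>i j. (\<integral>\<omega>. X i \<omega> * X j \<omega> \<partial>M) = (if i = j then v i else 0)"
   and c: "c > 0"
   and sm: "summable (\<lambda>m. (real m + 1)^2 * (\<Sum>k\<in>{0..<2^m}. v k) / (c^m)^2)"
  shows "AE \<omega> in M. eventually (\<lambda>m. mx X m 0 \<omega> < c^m) sequentially"
proof -
  define A where "A m = {\<omega>\<in>space M. (c^m)^2 \<le> (mx X m 0 \<omega>)^2}" for m
  have As[measurable]: "A m \<in> sets M" for m unfolding A_def by measurable
  have mA: "measure M (A m) \<le> (real m + 1)^2 * (\<Sum>k\<in>{0..<2^m}. v k) / (c^m)^2" for m
  proof -
    have L: "integrable M (\<lambda>\<omega>. (mx X m 0 \<omega>)^2)" 
      "(\<integral>\<omega>. (mx X m 0 \<omega>)^2 \<partial>M) \<le> (real m + 1)^2 * (\<Sum>k\<in>{0..<0+2^m}. v k)"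
      using mx_L2[OF meas int cov, of m 0] by auto
    have "measure M (A m) \<le> (\<integral>\<omega>. (mx X m 0 \<omega>)^2 \<partial>M) / (c^m)^2"
      unfolding A_def using c by (intro integral_Markov_inequality_measure[OF L(1), where A="space M"]) auto
    also have "\<dots> \<le> (real m + 1)^2 * (\<Sum>k\<in>{0..<2^m}. v k) / (c^m)^2"
      using L(2) c by (intro divide_right_mono) auto
    finally show ?thesis .
  qed
  have "summable (\<lambda>m. measure M (A m))"
    by (rule summable_comparison_test'[OF sm, of 0]) (use mA in auto)
  then have "AE \<omega> in M. eventually (\<lambda>m. \<omega> \<in> space M - A m) sequentially"
    by (intro borel_cantelli_AE1) (auto simp: emeasure_eq_measure)
  then show ?thesis
  proof (rule AE_mp, intro AE_I2 impI)
    fix \<omega> assume \<omega>: "\<omega> \<in> space M" and ev: "eventually (\<lambda>m. \<omega> \<in> space M - A m) sequentially"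
    show "eventually (\<lambda>m. mx X m 0 \<omega> < c^m) sequentially"
      using ev
    proof (rule eventually_mono)
      fix m assume "\<omega> \<in> space M - A m"
      then have "(mx X m 0 \<omega>)^2 < (c^m)^2" using \<omega> by (auto simp: A_def)
      then show "mx X m 0 \<omega> < c^m" using c mx_nonneg[of X m 0 \<omega>]
        by (meson power_less_imp_less_base zero_le_power less_imp_le)
    qed
  qed
qed

end



lemma growth_det:
  fixes X :: "nat \<Rightarrow> 'a \<Rightarrow> real"
  assumes q: "q > 0" and H: "\<forall>m\<ge>m0. mx X m 0 \<omega> < (2 powr q)^m" and n: "n \<ge> 1" and j: "j \<le> n"
  shows "\<bar>\<Sum>k<j. X k \<omega>\<bar> \<le> mx X m0 0 \<omega> + 2 powr q * real n powr q"
proof -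
  have ex: "\<exists>m. n \<le> 2^m" using less_exp[of n] less_imp_le by blast
  define m where "m = (LEAST m. n \<le> 2^m)"
  have nm: "n \<le> 2^m" unfolding m_def by (rule LeastI_ex[OF ex])
  have bnd: "\<bar>\<Sum>k<j. X k \<omega>\<bar> \<le> mx X m' 0 \<omega>" if "n \<le> 2^m'" for m'
    using mx_bound[where i=j and l=m' and a=0 and X=X and \<omega>=\<omega>] that j by (simp add: atLeast0LessThan)
  have K: "0 \<le> 2 powr q * real n powr q" by simp
  show ?thesis
  proof (cases "m \<le> m0")
    case True
    have "(2::nat)^m \<le> 2^m0" using True by (rule power_increasing) simp
    then have "n \<le> 2^m0" using nm by linarith
    then have "\<bar>\<Sum>k<j. X k \<omega>\<bar> \<le> mx X m0 0 \<omega>" by (rule bnd)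
    then show ?thesis using K by linarith
  next
    case False
    then obtain m' where m': "m = Suc m'" by (cases m) auto
    have "m' < m" using m' by simp
    then have "\<not> n \<le> 2^m'" unfolding m_def by (rule not_less_Least)
    then have nlt: "2^m' < n" by simp
    have "mx X m 0 \<omega> < (2 powr q)^m" using H False by simp
    then have "\<bar>\<Sum>k<j. X k \<omega>\<bar> < (2 powr q)^m" using bnd[OF nm] by linarith
    also have "(2 powr q)^m = 2 powr q * (real (2^m')) powr q"
    proof -
      have "(real (2^m')) powr q = (2 powr q)^m'"
        by (simp add: powr_realpow[symmetric] powr_powr mult.commute powr_power)
      then show ?thesis by (simp add: m')
    qed
    also have "\<dots> \<le> 2 powr q * real n powr q"
      using nlt q by (intro mult_left_mono powr_mono2) auto
    finally show ?thesis using mx_nonneg[of X m0 0 \<omega>] by linarith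
  qed
qed

lemma abel_bound:
  fixes b X :: "nat \<Rightarrow> real"
  assumes b0: "\<And>k. 0 \<le> b k" and bmono: "\<And>k. b (Suc k) \<le> b k"
    and S: "\<And>j. j \<le> n \<Longrightarrow> \<bar>\<Sum>k<j. X k\<bar> \<le> K"
  shows "\<bar>\<Sum>k<n. b k * X k\<bar> \<le> b 0 * K"
proof -
  define S where "S j = (\<Sum>k<j. X k)" for j
  have id: "(\<Sum>k<n. b k * X k) = b n * S n + (\<Sum>k<n. (b k - b (Suc k)) * S (Suc k))"
    by (induction n) (simp_all add: S_def algebra_simps)
  have "\<bar>\<Sum>k<n. (b k - b (Suc k)) * S (Suc k)\<bar> \<le> (\<Sum>k<n. (b k - b (Suc k)) * K)"
  proof -
    have "\<bar>\<Sum>k<n. (b k - b (Suc k)) * S (Suc k)\<bar> \<le> (\<Sum>k<n. \<bar>(b k - b (Suc k)) * S (Suc k)\<bar>)"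
      by (rule sum_abs)
    also have "\<dots> \<le> (\<Sum>k<n. (b k - b (Suc k)) * K)"
    proof (rule sum_mono)
      fix k assume "k \<in> {..<n}"
      then have "\<bar>S (Suc k)\<bar> \<le> K" using S[of "Suc k"] unfolding S_def by auto
      then show "\<bar>(b k - b (Suc k)) * S (Suc k)\<bar> \<le> (b k - b (Suc k)) * K"
        using bmono[of k] by (simp add: abs_mult mult_left_mono)
    qed
    finally show ?thesis .
  qed
  moreover have "(\<Sum>k<n. (b k - b (Suc k)) * K) = (b 0 - b n) * K"
    by (simp add: sum_distrib_right[symmetric] sum_lessThan_telescope')
  moreover have "\<bar>b n * S n\<bar> \<le> b n * K" using S[of n] b0[of n] unfolding S_def by (simp add: abs_mult mult_left_mono)
  ultimately show ?thesis unfolding id by (simp add: algebra_simps)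
qed



lemma harm_bound: "n \<ge> 1 \<Longrightarrow> (\<Sum>k\<in>{1..n}. 1 / real k) \<le> 1 + ln (real n)"
proof (induction n rule: dec_induct)
  case base
  then show ?case by simp
next
  case (step n)
  have n: "real n > 0" using step.hyps by simp
  have "ln (real n / real (Suc n)) \<le> real n / real (Suc n) - 1"
    using n by (intro ln_le_minus_one) simp
  also have "\<dots> = - (1 / real (Suc n))" by (simp add: field_simps)
  finally have "1 / real (Suc n) \<le> ln (real (Suc n)) - ln (real n)"
    using n by (simp add: ln_div)
  then show ?case using step.IH by simp
qed

lemma ln_powr_bound:
  fixes \<alpha> q :: real
  assumes q: "q > 0"
  shows "\<exists>A>0. \<forall>k::nat. k \<ge> 2 \<longrightarrow> ln (real k) powr (2*\<alpha>) \<le> A * real k powr q"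
proof (cases "\<alpha> \<le> 0")
  case True
  define A where "A = ln 2 powr (2*\<alpha>)"
  have A: "A > 0" unfolding A_def by simp
  show ?thesis
  proof (intro exI[of _ A] conjI allI impI A)
    fix k :: nat assume k: "k \<ge> 2"
    have l2: "ln 2 \<le> ln (real k)" using k by simp
    have "ln (real k) powr (2*\<alpha>) \<le> A" unfolding A_def
      using True l2 by (intro powr_mono2') auto
    also have "A \<le> A * real k powr q" using A k q
      by (simp add: ge_one_powr_ge_zero)
    finally show "ln (real k) powr (2*\<alpha>) \<le> A * real k powr q" .
  qed
next
  case False
  define \<beta> where "\<beta> = q / (2*\<alpha>)"
  have b: "\<beta> > 0" using False q by (simp add: \<beta>_def)
  define A where "A = \<beta> powr (- (2*\<alpha>))"
  have A: "A > 0" unfolding A_def using b by simp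
  show ?thesis
  proof (intro exI[of _ A] conjI allI impI A)
    fix k :: nat assume k: "k \<ge> 2"
    have kp: "real k > 0" using k by simp
    have "ln (real k) = ln (real k powr \<beta>) / \<beta>" using b kp by (simp add: ln_powr)
    also have "\<dots> \<le> real k powr \<beta> / \<beta>" using b kp by (intro divide_right_mono ln_bound) auto
    finally have le: "ln (real k) \<le> real k powr \<beta> / \<beta>" .
    have "ln (real k) powr (2*\<alpha>) \<le> (real k powr \<beta> / \<beta>) powr (2*\<alpha>)"
      using False le k by (intro powr_mono2) auto
    also have "\<dots> = (real k powr \<beta>) powr (2*\<alpha>) / \<beta> powr (2*\<alpha>)"
      using b kp by (simp add: powr_divide)
    also have "(real k powr \<beta>) powr (2*\<alpha>) = real k powr q"
      using False unfolding \<beta>_def by (simp add: powr_powr)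
    also have "real k powr q / \<beta> powr (2*\<alpha>) = A * real k powr q"
      unfolding A_def by (simp add: powr_minus_divide)
    finally show "ln (real k) powr (2*\<alpha>) \<le> A * real k powr q" .
  qed
qed

lemma summable_cube_geom:
  fixes c :: real
  assumes c: "c > 1"
  shows "summable (\<lambda>m. (real m + 1)^3 / c^m)"
proof -
  define d where "d = root 4 c"
  have d: "d > 1" unfolding d_def using c by simp
  have d4: "d^4 = c" unfolding d_def using c by simp
  have r: "norm (1/d) < 1" using d by simp
  have L: "(\<lambda>n. of_nat n * (1/d)^n) \<longlonglongrightarrow> (0::real)" by (rule powser_times_n_limit_0[OF r])
  have L2: "(\<lambda>n. (1/d)^n) \<longlonglongrightarrow> (0::real)" using d by (intro LIMSEQ_power_zero) simp
  have "(\<lambda>n. of_nat n * (1/d)^n + (1/d)^n) \<longlonglongrightarrow> (0::real)" using tendsto_add[OF L L2] by simp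
  then have ev: "eventually (\<lambda>n. of_nat n * (1/d)^n + (1/d)^n < (1::real)) sequentially"
    by (rule order_tendstoD) simp
  show ?thesis
  proof (rule summable_comparison_test_ev[OF _ summable_geometric[OF r]])
    show "eventually (\<lambda>m. norm ((real m + 1)^3 / c^m) \<le> (1/d)^m) sequentially"
      using ev
    proof (rule eventually_mono)
      fix m assume h: "real m * (1/d)^m + (1/d)^m < 1"
      define u where "u = (real m + 1) * (1/d)^m"
      have u: "0 \<le> u" "u \<le> 1" using h d by (auto simp: u_def algebra_simps)
      have "u^3 \<le> 1" using u by (simp add: power_le_one)
      have cm: "c^m = (d^m)^3 * d^m"
      proof -
        have "c^m = (d^m)^4" unfolding d4[symmetric] by (simp add: power_mult[symmetric] mult.commute)
        also have "\<dots> = (d^m)^3 * d^m" by (simp add: power_Suc2[symmetric] del: power_Suc)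
        finally show ?thesis .
      qed
      have eq: "(real m + 1)^3 / c^m = u^3 * (1/d)^m"
        unfolding u_def cm using d
        by (simp add: power_mult_distrib power_divide field_simps)
      have "u^3 * (1/d)^m \<le> 1 * (1/d)^m" using \<open>u^3 \<le> 1\<close> d by (intro mult_right_mono) auto
      then show "norm ((real m + 1)^3 / c^m) \<le> (1/d)^m" using eq d u by (simp add: abs_mult)
    qed
  qed
qed

lemma lnln_at_top: "filterlim (\<lambda>s::real. ln (ln (1/s))) at_top (at_right 0)"
  by real_asymp



lemma det_final:
  fixes X :: "nat \<Rightarrow> 'a \<Rightarrow> real" and eta :: "nat \<Rightarrow> real"
  assumes \<alpha>: "\<alpha> > -1/2" and qdef: "q = (1/2 + \<alpha>)/2"
   and H: "\<forall>m\<ge>m0. mx X m 0 \<omega> < (2 powr q)^m"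
   and Xdef: "\<And>k. X k \<omega> = (if 2 \<le> k then ln (real k) powr \<alpha> / real k powr (1/2) else 0) * eta k"
  shows "((\<lambda>s. f_alpha \<alpha> s * (\<Sum>k = 2..Mfl s. (ln (real k)) powr \<alpha> / (real k) powr (1 / 2 + s) * eta k)) \<longlongrightarrow> 0) (at_right 0)"
proof -
  define p where "p = 1/2 + \<alpha>"
  have p: "p > 0" using \<alpha> by (simp add: p_def)
  have q: "q > 0" "q < p" using p by (auto simp: qdef p_def)
  define c where "c = 2 powr q"
  define K0 where "K0 = mx X m0 0 \<omega>"
  have K0: "K0 \<ge> 0" unfolding K0_def by (rule mx_nonneg)
  have gr: "\<bar>\<Sum>k<j. X k \<omega>\<bar> \<le> K0 + c * real n powr q" if "n \<ge> 1" "j \<le> n" for n j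
    unfolding K0_def c_def by (rule growth_det[OF q(1) H that])
  have cpos: "c_alpha \<alpha> > 0" unfolding c_alpha_def using \<alpha> by (simp add: Gamma_real_pos)
  have ev1: "eventually (\<lambda>s. 1 / c_alpha \<alpha> \<le> ln (ln (1/s))) (at_right 0)"
    using lnln_at_top unfolding filterlim_at_top by blast
  have ev2: "eventually (\<lambda>s::real. 0 < s \<and> s < 1) (at_right 0)"
    unfolding eventually_at_right_field by (intro exI[of _ 1]) auto
  define g where "g s = K0 * s powr p + c * 2 powr q * s powr (p - q)" for s :: real
  have bound: "norm (f_alpha \<alpha> s * (\<Sum>k = 2..Mfl s. (ln (real k)) powr \<alpha> / (real k) powr (1 / 2 + s) * eta k)) \<le> g s"
    if s: "0 < s" "s < 1" and L: "1 / c_alpha \<alpha> \<le> ln (ln (1/s))" for s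
  proof -
    define N where "N = Mfl s"
    define b where "b k = real (max 1 k) powr (-s)" for k
    have b0: "0 \<le> b k" for k by (simp add: b_def)
    have bm: "b (Suc k) \<le> b k" for k unfolding b_def using s by (intro powr_mono2') auto
    have bz: "b 0 = 1" by (simp add: b_def)
    have sum_eq: "(\<Sum>k = 2..N. (ln (real k)) powr \<alpha> / (real k) powr (1 / 2 + s) * eta k) = (\<Sum>k<N+1. b k * X k \<omega>)"
    proof (rule sum.mono_neutral_cong_left)
      show "finite {..<N+1}" by simp
      show "{2..N} \<subseteq> {..<N+1}" by auto
      show "\<forall>i\<in>{..<N + 1} - {2..N}. b i * X i \<omega> = 0" by (auto simp: Xdef)
      fix k assume k: "k \<in> {2..N}"
      then have kp: "real k > 0" "2 \<le> k" by auto
      have "real k powr (1/2 + s) = real k powr (1/2) * real k powr s" by (simp add: powr_add)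
      moreover have "b k = 1 / real k powr s" unfolding b_def using kp by (simp add: powr_minus_divide max_def)
      ultimately show "(ln (real k)) powr \<alpha> / (real k) powr (1 / 2 + s) * eta k = b k * X k \<omega>"
        using kp by (simp add: Xdef)
    qed
    have nN: "real (N+1) \<le> 2 / s"
    proof -
      have "real N \<le> 1 / s" unfolding N_def Mfl_def using s by simp
      moreover have "1 \<le> 1 / s" using s by simp
      ultimately show ?thesis by simp
    qed
    have ab: "\<bar>\<Sum>k<N+1. b k * X k \<omega>\<bar> \<le> b 0 * (K0 + c * real (N+1) powr q)"
    proof (rule abel_bound[where b=b and X="\<lambda>k. X k \<omega>"])
      fix j assume "j \<le> N + 1"
      then show "\<bar>\<Sum>k<j. X k \<omega>\<bar> \<le> K0 + c * real (N+1) powr q" by (intro gr) auto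
    qed (auto intro: b0 bm)
    also have "\<dots> \<le> K0 + c * (2 / s) powr q"
      unfolding bz using nN q s by (simp add: c_def powr_mono2)
    also have "(2/s) powr q = 2 powr q * s powr (-q)"
      using s by (simp add: powr_divide powr_minus_divide)
    finally have S: "\<bar>\<Sum>k<N+1. b k * X k \<omega>\<bar> \<le> K0 + c * 2 powr q * s powr (-q)" by simp
    have F: "\<bar>f_alpha \<alpha> s\<bar> \<le> s powr p"
    proof -
      define Lc where "Lc = c_alpha \<alpha> * ln (ln (1/s))"
      have Lc: "Lc \<ge> 1" unfolding Lc_def using L cpos by (simp add: field_simps)
      have e: "s powr (1 + 2*\<alpha>) = (s powr p)^2"
      proof -
        have "(s powr p)^2 = s powr (p * 2)" by (metis mult_2_right power2_eq_square powr_add)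
        then show ?thesis by (simp add: p_def algebra_simps)
      qed
      have fe: "f_alpha \<alpha> s = sqrt ((s powr p)^2 / Lc)" unfolding f_alpha_def Lc_def e ..
      have f0: "0 \<le> f_alpha \<alpha> s" unfolding fe using Lc by simp
      have "f_alpha \<alpha> s = sqrt ((s powr p)^2 / Lc)" by (rule fe)
      also have "\<dots> \<le> sqrt ((s powr p)^2)" using Lc
        by (intro real_sqrt_le_mono) (simp add: divide_le_eq mult_le_cancel_left1)
      also have "\<dots> = s powr p" by simp
      finally show ?thesis using f0 by simp
    qed
    have "norm (f_alpha \<alpha> s * (\<Sum>k = 2..Mfl s. (ln (real k)) powr \<alpha> / (real k) powr (1 / 2 + s) * eta k))
        = \<bar>f_alpha \<alpha> s\<bar> * \<bar>\<Sum>k<N+1. b k * X k \<omega>\<bar>" using sum_eq by (simp add: N_def abs_mult)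
    also have "\<dots> \<le> s powr p * (K0 + c * 2 powr q * s powr (-q))"
      using F S by (intro mult_mono) auto
    also have "\<dots> = g s" unfolding g_def using s by (simp add: algebra_simps powr_add[symmetric])
    finally show ?thesis .
  qed
  have lim: "(g \<longlongrightarrow> 0) (at_right 0)"
  proof -
    have id: "((\<lambda>s::real. s) \<longlongrightarrow> 0) (at_right 0)" by (rule tendsto_ident_at)
    have nn: "eventually (\<lambda>s::real. 0 \<le> s) (at_right 0)"
      using eventually_at_right_less[of "0::real"] by (rule eventually_mono) simp
    have l1: "((\<lambda>s::real. s powr p) \<longlongrightarrow> 0) (at_right 0)"
      by (rule tendsto_zero_powrI[OF id tendsto_const nn p])
    have l2: "((\<lambda>s::real. s powr (p - q)) \<longlongrightarrow> 0) (at_right 0)"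
      using q by (intro tendsto_zero_powrI[OF id tendsto_const nn]) simp
    show ?thesis unfolding g_def
      using tendsto_add[OF tendsto_mult_right_zero[OF l1, of K0] tendsto_mult_right_zero[OF l2, of "c * 2 powr q"]]
      by simp
  qed
  show ?thesis
  proof (rule Lim_null_comparison[OF _ lim])
    show "eventually (\<lambda>s. norm (f_alpha \<alpha> s * (\<Sum>k = 2..Mfl s. (ln (real k)) powr \<alpha> / (real k) powr (1 / 2 + s) * eta k)) \<le> g s) (at_right 0)"
      using eventually_conj[OF ev1 ev2] by (rule eventually_mono) (use bound in auto)
  qed
qed



theorem lemma5p2:
  fixes M :: "'a measure" and \<eta> :: "nat \<Rightarrow> 'a \<Rightarrow> real" and \<alpha> :: real
  assumes "prob_space M"
    and "\<And>k. \<eta> k \<in> borel_measurable M"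
    and "prob_space.indep_vars M (\<lambda>_. borel) \<eta> UNIV"
    and "\<And>k. distr M borel (\<eta> k) = distr M borel (\<eta> 1)"
    and "integrable M (\<eta> 1)"
    and "integrable M (\<lambda>x. (\<eta> 1 x)\<^sup>2)"
    and "prob_space.expectation M (\<eta> 1) = 0"
    and "prob_space.expectation M (\<lambda>x. (\<eta> 1 x)\<^sup>2) = 1"
    and "\<alpha> > - 1 / 2"
  shows "AE \<omega> in M. ((\<lambda>s. f_alpha \<alpha> s *
            (\<Sum>k = 2..Mfl s. (ln (real k)) powr \<alpha> / (real k) powr (1 / 2 + s) * \<eta> k \<omega>))
           \<longlongrightarrow> 0) (at_right 0)"
proof -
  interpret P: prob_space M by (rule assms(1))
  have meas[measurable]: "\<And>k. \<eta> k \<in> borel_measurable M" by (rule assms(2))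
  have tr: "integrable M (\<lambda>x. g (\<eta> k x)) = integrable M (\<lambda>x. g (\<eta> 1 x)) \<and>
            (\<integral>x. g (\<eta> k x) \<partial>M) = (\<integral>x. g (\<eta> 1 x) \<partial>M)"
    if g[measurable]: "g \<in> borel_measurable borel" for g :: "real \<Rightarrow> real" and k
  proof
    have a: "integrable (distr M borel (\<eta> k)) g = integrable M (\<lambda>x. g (\<eta> k x))"
      by (rule integrable_distr_eq) simp_all
    have b: "integrable (distr M borel (\<eta> 1)) g = integrable M (\<lambda>x. g (\<eta> 1 x))"
      by (rule integrable_distr_eq) simp_all
    show "integrable M (\<lambda>x. g (\<eta> k x)) = integrable M (\<lambda>x. g (\<eta> 1 x))"
    proof -
      have "integrable M (\<lambda>x. g (\<eta> k x)) = integrable (distr M borel (\<eta> k)) g" by (rule a[symmetric])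
      also have "\<dots> = integrable (distr M borel (\<eta> 1)) g" by (simp only: assms(4)[of k])
      also have "\<dots> = integrable M (\<lambda>x. g (\<eta> 1 x))" by (rule b)
      finally show ?thesis .
    qed
    have c: "integral\<^sup>L (distr M borel (\<eta> k)) g = (\<integral>x. g (\<eta> k x) \<partial>M)"
      by (rule integral_distr) simp_all
    have d: "integral\<^sup>L (distr M borel (\<eta> 1)) g = (\<integral>x. g (\<eta> 1 x) \<partial>M)"
      by (rule integral_distr) simp_all
    show "(\<integral>x. g (\<eta> k x) \<partial>M) = (\<integral>x. g (\<eta> 1 x) \<partial>M)"
    proof -
      have "(\<integral>x. g (\<eta> k x) \<partial>M) = integral\<^sup>L (distr M borel (\<eta> k)) g" by (rule c[symmetric])
      also have "\<dots> = integral\<^sup>L (distr M borel (\<eta> 1)) g" by (simp only: assms(4)[of k])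
      also have "\<dots> = (\<integral>x. g (\<eta> 1 x) \<partial>M)" by (rule d)
      finally show ?thesis .
    qed
  qed
  have i1: "integrable M (\<eta> k)" for k using tr[of "\<lambda>x. x" k] assms(5) by simp
  have e1: "(\<integral>x. \<eta> k x \<partial>M) = 0" for k using tr[of "\<lambda>x. x" k] assms(7) by simp
  have i2: "integrable M (\<lambda>x. (\<eta> k x)^2)" for k using tr[of "\<lambda>x. x^2" k] assms(6) by simp
  have e2: "(\<integral>x. (\<eta> k x)^2 \<partial>M) = 1" for k using tr[of "\<lambda>x. x^2" k] assms(8) by simp
  have prod: "integrable M (\<lambda>x. \<eta> i x * \<eta> j x) \<and> (\<integral>x. \<eta> i x * \<eta> j x \<partial>M) = (if i = j then 1 else 0)" for i j
  proof (cases "i = j")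
    case True then show ?thesis using i2[of j] e2[of j] by (simp add: power2_eq_square)
  next
    case False
    have ind: "P.indep_vars (\<lambda>_. borel) \<eta> {i,j}" by (rule P.indep_vars_subset[OF assms(3)]) simp
    have "integrable M (\<lambda>x. \<Prod>k\<in>{i,j}. \<eta> k x)" "(\<integral>x. (\<Prod>k\<in>{i,j}. \<eta> k x) \<partial>M) = (\<Prod>k\<in>{i,j}. \<integral>x. \<eta> k x \<partial>M)"
      using P.indep_vars_integrable[OF _ ind] P.indep_vars_lebesgue_integral[OF _ ind] i1 by auto
    then show ?thesis using False e1 by simp
  qed
  define w where "w k = (if 2 \<le> k then ln (real k) powr \<alpha> / real k powr (1/2) else 0)" for k :: nat
  define X where "X k \<omega> = w k * \<eta> k \<omega>" for k \<omega>
  define v where "v k = (w k)^2" for k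
  have Xm[measurable]: "X k \<in> borel_measurable M" for k unfolding X_def by simp
  have Xe: "(\<lambda>\<omega>. X i \<omega> * X j \<omega>) = (\<lambda>\<omega>. (w i * w j) * (\<eta> i \<omega> * \<eta> j \<omega>))" for i j
    by (auto simp: X_def fun_eq_iff algebra_simps)
  have Xint: "integrable M (\<lambda>\<omega>. X i \<omega> * X j \<omega>)" for i j
    unfolding Xe using prod[of i j] by simp
  have Xcov: "(\<integral>\<omega>. X i \<omega> * X j \<omega> \<partial>M) = (if i = j then v i else 0)" for i j
    unfolding Xe using prod[of i j] by (simp add: v_def power2_eq_square)
  define p where "p = 1/2 + \<alpha>"
  define q where "q = p / 2"
  have q: "q > 0" using assms(9) by (simp add: q_def p_def)
  define c where "c = 2 powr q"
  have c: "c > 1" unfolding c_def using q by simp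
  obtain A where A: "A > 0" "\<And>k::nat. k \<ge> 2 \<Longrightarrow> ln (real k) powr (2*\<alpha>) \<le> A * real k powr q"
    using ln_powr_bound[OF q, of \<alpha>] by blast
  have vb: "(\<Sum>k\<in>{0..<2^m}. v k) \<le> A * c^m * (real m + 1)" for m
  proof -
    have pt: "v k \<le> A * c^m * (1 / real k)" if k: "k \<in> {0..<2^m}" for k
    proof (cases "2 \<le> k")
      case False then show ?thesis using A c by (simp add: v_def w_def)
    next
      case True
      have kp: "real k > 0" "ln (real k) > 0" using True by auto
      have "v k = ln (real k) powr (2*\<alpha>) / real k"
      proof -
        have "(ln (real k) powr \<alpha>)^2 = ln (real k) powr (2*\<alpha>)"
        proof -
          have "(ln (real k) powr \<alpha>)^2 = ln (real k) powr (\<alpha> + \<alpha>)" unfolding power2_eq_square by (rule powr_add[symmetric])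
          also have "\<alpha> + \<alpha> = 2*\<alpha>" by simp
          finally show ?thesis .
        qed
        moreover have "(real k powr (1/2))^2 = real k"
          using kp by (simp add: powr_half_sqrt)
        ultimately show ?thesis using True by (simp add: v_def w_def power_divide)
      qed
      also have "\<dots> \<le> A * real k powr q / real k" using A(2)[OF True] kp by (simp add: divide_right_mono)
      also have "real k powr q \<le> c^m"
      proof -
        have "real k powr q \<le> real (2^m) powr q" using k q by (intro powr_mono2) auto
        also have "real (2^m) powr q = c^m" unfolding c_def
          by (simp add: powr_realpow[symmetric] powr_powr mult.commute powr_power)
        finally show ?thesis .
      qed
      then have "A * real k powr q / real k \<le> A * c^m * (1 / real k)" using A kp
        by (simp add: divide_right_mono)
      finally show ?thesis .
    qed
    have "(\<Sum>k\<in>{0..<2^m}. v k) \<le> (\<Sum>k\<in>{0..<2^m}. A * c^m * (1 / real k))" by (rule sum_mono) (rule pt)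
    also have "\<dots> = A * c^m * (\<Sum>k\<in>{0..<2^m}. 1 / real k)" by (simp add: sum_distrib_left)
    also have "(\<Sum>k\<in>{0..<2^m}. 1 / real k) \<le> (\<Sum>k\<in>{0..2^m}. 1 / real k)"
      by (rule sum_mono2) auto
    also have "(\<Sum>k\<in>{0..2^m}. 1 / real k) = (\<Sum>k\<in>{1..2^m}. 1 / real k)"
      by (simp add: sum.atLeast_Suc_atMost)
    also have "\<dots> \<le> 1 + ln (real (2^m))" by (rule harm_bound) simp
    also have "ln (real (2^m)) = real m * ln 2" by (simp add: ln_realpow)
    also have "real m * ln 2 \<le> real m" using ln_2_less_1 by (simp add: mult_left_le)
    finally show ?thesis using A c by (simp add: mult_left_mono algebra_simps)
  qed
  have sm: "summable (\<lambda>m. (real m + 1)^2 * (\<Sum>k\<in>{0..<2^m}. v k) / (c^m)^2)"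
  proof (rule summable_comparison_test'[where N=0])
    show "summable (\<lambda>m. A * ((real m + 1)^3 / c^m))"
      using summable_mult[OF summable_cube_geom[OF c], of A] .
    fix m :: nat
    have vnn: "0 \<le> (\<Sum>k\<in>{0..<2^m}. v k)" by (simp add: v_def sum_nonneg)
    have "(real m + 1)^2 * (\<Sum>k\<in>{0..<2^m}. v k) / (c^m)^2 \<le> (real m + 1)^2 * (A * c^m * (real m + 1)) / (c^m)^2"
      using vb[of m] c by (intro divide_right_mono mult_left_mono) auto
    also have "\<dots> = A * ((real m + 1)^3 / c^m)" using c by (simp add: power2_eq_square power3_eq_cube field_simps)
    finally show "norm ((real m + 1)^2 * (\<Sum>k\<in>{0..<2^m}. v k) / (c^m)^2) \<le> A * ((real m + 1)^3 / c^m)"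
      using vnn by simp
  qed
  have ae: "AE \<omega> in M. eventually (\<lambda>m. mx X m 0 \<omega> < c^m) sequentially"
    by (rule P.mx_AE[OF Xm Xint Xcov _ sm]) (use c in simp)
  show ?thesis using ae
  proof (rule eventually_mono)
    fix \<omega> assume "eventually (\<lambda>m. mx X m 0 \<omega> < c^m) sequentially"
    then obtain m0 where H: "\<forall>m\<ge>m0. mx X m 0 \<omega> < (2 powr q)^m" unfolding eventually_sequentially c_def by blast
    show "((\<lambda>s. f_alpha \<alpha> s * (\<Sum>k = 2..Mfl s. (ln (real k)) powr \<alpha> / (real k) powr (1 / 2 + s) * \<eta> k \<omega>)) \<longlongrightarrow> 0) (at_right 0)"
      by (rule det_final[OF assms(9) _ H]) (simp_all add: q_def p_def X_def w_def)
  qed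
qed


end
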